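(* Let $k\ge 3$ and let $\mathcal{H}$ be a $k$-uniform hypertree. Then every eigenvalue $\lambda$ of $\mathcal{H}$ satisfies $\lambda^k\in\mathbb{R}$ if and only if $\mathcal{H}$ is a power tree, i.e., $\mathcal{H}\cong T^k$ for some (ordinary, $2$-uniform) tree $T$.
   Context: The paper phrases the spectral condition as $\sigma(\mathcal{H})\subseteq\mathbb{R}[\zeta_k]$ ($\zeta_k$ a principal $k$-th root of unity), meaning that every eigenvalue is a $k$-th root of a real number. Eigenvalues: for a $k$-uniform hypergraph on $[n]$ with normalized adjacency tensor $a_{i_1\dots i_k}=\frac1{(k-1)!}$ if $\{i_1,\dots,i_k\}$ is an edge and $0$ otherwise, $\lambda\in\mathbb{C}$ is an eigenvalue if there is $\mathbf{x}\in\mathbb{C}^n\setminus\{0\}$ with $\sum_{i_2,\dots,i_k}a_{j i_2\dots i_k}x_{i_2}\cdots x_{i_k}=\lambda x_j^{k-1}$ for all $j$; $\sigma(\mathcal{H})$ is the set of eigenvalues. A $k$-uniform hypertree is a connected acyclic $k$-uniform hypergraph. For a graph $T$ and $k\ge 2$, the $k$-th power $T^k$ is the $k$-uniform hypergraph obtained by adding to each edge $e$ of $T$ exactly $k-2$ new vertices $v_{e,1},\dots,v_{e,k-2}$ (distinct for distinct edges, each of degree $1$): $V(T^k)=V(T)\cup\{v_{e,j}\}$, $E(T^k)=\{e\cup\{v_{e,1},\dots,v_{e,k-2}\}: e\in E(T)\}$. *)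

theory Defs
  imports Complex_Main
begin

definition uniform_hypergraph :: "nat \<Rightarrow> 'a set \<Rightarrow> 'a set set \<Rightarrow> bool" where
  "uniform_hypergraph k V E \<longleftrightarrow> finite V \<and> (\<forall>e\<in>E. e \<subseteq> V \<and> card e = k)"

definition hg_connected :: "'a set \<Rightarrow> 'a set set \<Rightarrow> bool" where
  "hg_connected V E \<longleftrightarrow> V \<noteq> {} \<and>
     (\<forall>u\<in>V. \<forall>v\<in>V. (u, v) \<in> {(a, b). \<exists>e\<in>E. a \<in> e \<and> b \<in> e}\<^sup>*)"

definition berge_cycle :: "'a set set \<Rightarrow> 'a list \<Rightarrow> 'a set list \<Rightarrow> bool" where
  "berge_cycle E vs es \<longleftrightarrow> length vs = length es \<and> length vs \<ge> 2 \<and>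
     distinct vs \<and> distinct es \<and> set es \<subseteq> E \<and>
     (\<forall>i < length vs. vs ! i \<in> es ! i \<and> vs ! ((i + 1) mod length vs) \<in> es ! i)"

definition hg_acyclic :: "'a set set \<Rightarrow> bool" where
  "hg_acyclic E \<longleftrightarrow> \<not> (\<exists>vs es. berge_cycle E vs es)"

definition hypertree :: "nat \<Rightarrow> 'a set \<Rightarrow> 'a set set \<Rightarrow> bool" where
  "hypertree k V E \<longleftrightarrow> uniform_hypergraph k V E \<and> hg_connected V E \<and> hg_acyclic E"

definition adj_tensor :: "nat \<Rightarrow> 'a set set \<Rightarrow> 'a list \<Rightarrow> complex" where
  "adj_tensor k E ids = (if set ids \<in> E then 1 / of_nat (fact (k - 1)) else 0)"

definition is_eigenvalue :: "nat \<Rightarrow> 'a set \<Rightarrow> 'a set set \<Rightarrow> complex \<Rightarrow> bool" where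
  "is_eigenvalue k V E lam \<longleftrightarrow> (\<exists>x :: 'a \<Rightarrow> complex. (\<exists>v\<in>V. x v \<noteq> 0) \<and>
     (\<forall>j\<in>V. (\<Sum>ids \<in> {ids. set ids \<subseteq> V \<and> length ids = k - 1}.
                 adj_tensor k E (j # ids) * (\<Prod>i\<leftarrow>ids. x i)) = lam * x j ^ (k - 1)))"

definition hg_spectrum :: "nat \<Rightarrow> 'a set \<Rightarrow> 'a set set \<Rightarrow> complex set" where
  "hg_spectrum k V E = {lam. is_eigenvalue k V E lam}"

definition hg_isomorphic :: "'a set \<Rightarrow> 'a set set \<Rightarrow> 'b set \<Rightarrow> 'b set set \<Rightarrow> bool" where
  "hg_isomorphic V E V' E' \<longleftrightarrow> (\<exists>f. bij_betw f V V' \<and> E' = (\<lambda>e. f ` e) ` E)"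

definition power_vertices :: "nat \<Rightarrow> 'a set \<Rightarrow> 'a set set \<Rightarrow> ('a + ('a set \<times> nat)) set" where
  "power_vertices k W F = Inl ` W \<union> {Inr (e, j) | e j. e \<in> F \<and> j < k - 2}"

definition power_edges :: "nat \<Rightarrow> 'a set set \<Rightarrow> ('a + ('a set \<times> nat)) set set" where
  "power_edges k F = (\<lambda>e. Inl ` e \<union> {Inr (e, j) | j. j < k - 2}) ` F"

definition power_tree :: "nat \<Rightarrow> 'a set \<Rightarrow> 'a set set \<Rightarrow> bool" where
  "power_tree k V E \<longleftrightarrow> (\<exists>(W :: 'a set) F. hypertree 2 W F \<and>
      hg_isomorphic V E (power_vertices k W F) (power_edges k F))"

end

theory Submission
  imports Defs "HOL-Combinatorics.Multiset_Permutations"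
begin


definition nbsum :: "'a set set \<Rightarrow> ('a \<Rightarrow> complex) \<Rightarrow> 'a \<Rightarrow> complex" where
  "nbsum E x j = (\<Sum>e\<in>{e\<in>E. j\<in>e}. \<Prod>v\<in>e-{j}. x v)"

lemma eig_sum_edge:
  assumes U: "uniform_hypergraph k V E" and j: "j \<in> V" and k: "k \<ge> 1"
  shows "(\<Sum>ids \<in> {ids. set ids \<subseteq> V \<and> length ids = k - 1}.
                 adj_tensor k E (j # ids) * (\<Prod>i\<leftarrow>ids. x i)) = nbsum E x j"
proof -
  have fV: "finite V" and EV: "\<And>e. e\<in>E \<Longrightarrow> e \<subseteq> V \<and> card e = k"
    using U by (auto simp: uniform_hypergraph_def)
  have fE: "finite E" using fV EV by (meson Pow_iff finite_Pow_iff rev_finite_subset subsetI)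
  define L where "L = {ids. set ids \<subseteq> V \<and> length ids = k - 1}"
  define L' where "L' = {ids\<in>L. set (j#ids) \<in> E}"
  define Ej where "Ej = {e\<in>E. j\<in>e}"
  have fL: "finite L" unfolding L_def using finite_lists_length_eq[OF fV] by simp
  have "(\<Sum>ids\<in>L. adj_tensor k E (j # ids) * (\<Prod>i\<leftarrow>ids. x i))
      = (\<Sum>ids\<in>L'. adj_tensor k E (j # ids) * (\<Prod>i\<leftarrow>ids. x i))"
    by (rule sum.mono_neutral_right[OF fL]) (auto simp: L'_def adj_tensor_def)
  also have L'eq: "L' = (\<Union>e\<in>Ej. permutations_of_set (e - {j}))"
  proof (intro set_eqI iffI)
    fix ids assume "ids \<in> L'"
    hence a: "set ids \<subseteq> V" "length ids = k - 1" "set (j#ids) \<in> E" by (auto simp: L'_def L_def)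
    hence "card (set (j#ids)) = length (j#ids)" using EV k by auto
    hence d: "distinct (j#ids)" by (rule card_distinct)
    show "ids \<in> (\<Union>e\<in>Ej. permutations_of_set (e - {j}))"
      using a d by (auto simp: Ej_def permutations_of_set_def intro!: bexI[of _ "set (j#ids)"])
  next
    fix ids assume "ids \<in> (\<Union>e\<in>Ej. permutations_of_set (e - {j}))"
    then obtain e where e: "e \<in> E" "j \<in> e" "set ids = e - {j}" "distinct ids"
      by (auto simp: Ej_def permutations_of_set_def)
    have fe: "finite e" using EV e fV finite_subset by blast
    have "length ids = card (e - {j})" using e distinct_card by metis
    also have "\<dots> = k - 1" using EV e fe by simp
    finally show "ids \<in> L'" using e EV by (auto simp: L'_def L_def insert_absorb)
  qed
  also have "(\<Sum>ids\<in>(\<Union>e\<in>Ej. permutations_of_set (e - {j})). adj_tensor k E (j # ids) * (\<Prod>i\<leftarrow>ids. x i))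
     = (\<Sum>e\<in>Ej. \<Sum>ids\<in>permutations_of_set (e - {j}). adj_tensor k E (j # ids) * (\<Prod>i\<leftarrow>ids. x i))"
  proof (rule sum.UNION_disjoint)
    show "finite Ej" using fE by (simp add: Ej_def)
    show "\<forall>i\<in>Ej. finite (permutations_of_set (i - {j}))" by simp
    show "\<forall>i\<in>Ej. \<forall>ja\<in>Ej. i \<noteq> ja \<longrightarrow> permutations_of_set (i - {j}) \<inter> permutations_of_set (ja - {j}) = {}"
      by (auto simp: Ej_def permutations_of_set_def)
  qed
  also have "\<dots> = (\<Sum>e\<in>Ej. \<Prod>v\<in>e-{j}. x v)"
  proof (rule sum.cong[OF refl])
    fix e assume e: "e \<in> Ej"
    have fe: "finite e" using EV[of e] e fV finite_subset by (auto simp: Ej_def)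
    have ce: "card (e - {j}) = k - 1" using EV e fe by (auto simp: Ej_def)
    have "(\<Sum>ids\<in>permutations_of_set (e - {j}). adj_tensor k E (j # ids) * (\<Prod>i\<leftarrow>ids. x i))
        = (\<Sum>ids\<in>permutations_of_set (e - {j}). 1 / of_nat (fact (k - 1)) * (\<Prod>v\<in>e-{j}. x v))"
    proof (rule sum.cong[OF refl])
      fix ids assume "ids \<in> permutations_of_set (e - {j})"
      hence i: "set ids = e - {j}" "distinct ids" by (auto simp: permutations_of_set_def)
      have "set (j#ids) = e" using i e by (auto simp: Ej_def)
      thus "adj_tensor k E (j # ids) * (\<Prod>i\<leftarrow>ids. x i) = 1 / of_nat (fact (k - 1)) * (\<Prod>v\<in>e-{j}. x v)"
        using e i by (simp add: adj_tensor_def Ej_def flip: prod.distinct_set_conv_list)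
    qed
    also have "\<dots> = (\<Prod>v\<in>e-{j}. x v)" using fe ce by simp
    finally show "(\<Sum>ids\<in>permutations_of_set (e - {j}). adj_tensor k E (j # ids) * (\<Prod>i\<leftarrow>ids. x i)) = (\<Prod>v\<in>e-{j}. x v)" .
  qed
  finally show ?thesis by (simp add: L_def nbsum_def Ej_def)
qed

lemma is_eigenvalue_edge:
  assumes U: "uniform_hypergraph k V E" and k: "k \<ge> 1"
  shows "is_eigenvalue k V E lam \<longleftrightarrow> (\<exists>x :: 'a \<Rightarrow> complex. (\<exists>v\<in>V. x v \<noteq> 0) \<and>
     (\<forall>j\<in>V. nbsum E x j = lam * x j ^ (k - 1)))"
  unfolding is_eigenvalue_def using eig_sum_edge[OF U _ k] by simp


lemma cyc2:
  assumes "hg_acyclic E" "a \<noteq> b" "a \<in> X" "b \<in> X" "a \<in> Y" "b \<in> Y" "X \<noteq> Y" "X \<in> E" "Y \<in> E"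
  shows False
proof -
  have *: "\<forall>i < length [a,b]. [a,b] ! i \<in> [X,Y] ! i \<and> [a,b] ! ((i + 1) mod length [a,b]) \<in> [X,Y] ! i"
  proof (intro allI impI)
    fix i :: nat assume "i < length [a,b]"
    hence "i = 0 \<or> i = 1" by auto
    thus "[a,b] ! i \<in> [X,Y] ! i \<and> [a,b] ! ((i + 1) mod length [a,b]) \<in> [X,Y] ! i"
      using assms by (elim disjE) simp_all
  qed
  have "berge_cycle E [a,b] [X,Y]"
    unfolding berge_cycle_def using * assms by simp
  thus False using assms(1) unfolding hg_acyclic_def by blast
qed

lemma cyc3:
  assumes "hg_acyclic E" "distinct [a,b,c]" "distinct [X,Y,Z]" "a \<in> X" "b \<in> X" "b \<in> Y" "c \<in> Y"
    "c \<in> Z" "a \<in> Z" "X \<in> E" "Y \<in> E" "Z \<in> E"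
  shows False
proof -
  have *: "\<forall>i < length [a,b,c]. [a,b,c] ! i \<in> [X,Y,Z] ! i \<and> [a,b,c] ! ((i + 1) mod length [a,b,c]) \<in> [X,Y,Z] ! i"
  proof (intro allI impI)
    fix i :: nat assume "i < length [a,b,c]"
    hence "i = 0 \<or> i = 1 \<or> i = 2" by auto
    thus "[a,b,c] ! i \<in> [X,Y,Z] ! i \<and> [a,b,c] ! ((i + 1) mod length [a,b,c]) \<in> [X,Y,Z] ! i"
      using assms by (elim disjE) simp_all
  qed
  have "berge_cycle E [a,b,c] [X,Y,Z]"
    unfolding berge_cycle_def using * assms(2,3,10-12) by (simp del: distinct.simps)
  thus False using assms(1) unfolding hg_acyclic_def by blast
qed

lemma cyc4:
  assumes "hg_acyclic E" "distinct [a,b,c,d]" "distinct [X,Y,Z,W]" "a \<in> X" "b \<in> X" "b \<in> Y" "c \<in> Y"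
    "c \<in> Z" "d \<in> Z" "d \<in> W" "a \<in> W" "X \<in> E" "Y \<in> E" "Z \<in> E" "W \<in> E"
  shows False
proof -
  have *: "\<forall>i < length [a,b,c,d]. [a,b,c,d] ! i \<in> [X,Y,Z,W] ! i \<and> [a,b,c,d] ! ((i + 1) mod length [a,b,c,d]) \<in> [X,Y,Z,W] ! i"
  proof (intro allI impI)
    fix i :: nat assume "i < length [a,b,c,d]"
    hence "i = 0 \<or> i = 1 \<or> i = 2 \<or> i = 3" by auto
    thus "[a,b,c,d] ! i \<in> [X,Y,Z,W] ! i \<and> [a,b,c,d] ! ((i + 1) mod length [a,b,c,d]) \<in> [X,Y,Z,W] ! i"
      using assms by (elim disjE) simp_all
  qed
  have "berge_cycle E [a,b,c,d] [X,Y,Z,W]"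
    unfolding berge_cycle_def using * assms(2,3,12-15) by (simp del: distinct.simps)
  thus False using assms(1) unfolding hg_acyclic_def by blast
qed


lemma cubic_root_nonreal: "\<exists>z::complex. z^3 = z^2 + 1 \<and> z^3 \<notin> \<real>"
proof -
  have "\<exists>r::real. 1 \<le> r \<and> r \<le> 2 \<and> r^3 - r^2 - 1 = 0"
    by (rule IVT') (auto intro!: continuous_intros)
  then obtain r :: real where r: "1 \<le> r" "r^3 - r^2 - 1 = 0" by blast
  have r1: "r > 1" using r by (cases "r = 1") auto
  define d where "d = (r-1)*(3*r+1)"
  have d: "d > 0" using r1 by (simp add: d_def)
  define a where "a = (1-r)/2"
  define b where "b = sqrt d / 2"
  have b: "b > 0" "b^2 = d/4" using d by (auto simp: b_def power_divide)
  define z where "z = Complex a b"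
  have q: "z^2 + of_real (r-1) * z + of_real (r^2-r) = 0"
  proof -
    have "Re (z^2 + of_real (r-1) * z + of_real (r^2-r)) = a^2 - b^2 + (r-1)*a + r^2 - r"
      by (simp add: z_def power2_eq_square)
    also have "\<dots> = 0" using b(2) by (simp add: a_def d_def field_simps power2_eq_square)
    finally have 1: "Re (z^2 + of_real (r-1) * z + of_real (r^2-r)) = 0" .
    have "Im (z^2 + of_real (r-1) * z + of_real (r^2-r)) = 2*a*b + (r-1)*b"
      by (simp add: z_def power2_eq_square)
    also have "\<dots> = 0" by (simp add: a_def field_simps)
    finally show ?thesis using 1 by (simp add: complex_eq_iff)
  qed
  have rr: "(of_real r :: complex)^3 - (of_real r)^2 - 1 = 0"
    using arg_cong[OF r(2), of "of_real :: real \<Rightarrow> complex"] by simp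
  have "z^3 - z^2 - 1 = (z - of_real r) * (z^2 + of_real (r-1) * z + of_real (r^2-r))
        + ((of_real r)^3 - (of_real r)^2 - 1)"
    by (simp add: algebra_simps power2_eq_square power3_eq_cube)
  also have "\<dots> = 0" by (simp only: q rr) simp
  finally have z3: "z^3 = z^2 + 1" by (simp add: algebra_simps)
  have "Im (z^2) = 2*a*b" by (simp add: z_def power2_eq_square)
  moreover have "a \<noteq> 0" using r1 by (simp add: a_def)
  ultimately have "Im (z^2) \<noteq> 0" using b by simp
  hence "z^2 \<notin> \<real>" using complex_is_Real_iff by blast
  moreover have "z^2 = z^3 - 1" using z3 by simp
  ultimately have "z^3 \<notin> \<real>" by (metis Reals_1 Reals_diff)
  thus ?thesis using z3 by blast
qed

lemma complex_nth_root_ex: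
  fixes c :: complex assumes "n > 0" shows "\<exists>s. s ^ n = c"
proof (cases "c = 0")
  case True thus ?thesis using assms by (intro exI[of _ 0]) simp
next
  case False
  from bij_betw_nth_root_unity[OF False assms] have
    "(\<lambda>z. (root n (norm c) * cis (Arg c / n)) * z) ` {z. z ^ n = 1} = {z. z ^ n = c}"
    by (simp add: bij_betw_def)
  moreover have "(1::complex) \<in> {z. z ^ n = 1}" by simp
  ultimately show ?thesis by blast
qed


lemma G1: assumes "hg_acyclic E" "e\<in>E" "g\<in>E" "g\<noteq>e" "v\<in>e" "v\<in>g" "w\<in>e" "w\<in>g" shows "w = v"
  using cyc2[of E v w e g] assms by blast

lemma G2: assumes ac: "hg_acyclic E" and "v\<noteq>v'" "v\<in>e" "v'\<in>e" "e\<in>E" "g\<in>E" "g'\<in>E" "g\<noteq>e" "g'\<noteq>e"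
  "v\<in>g" "v'\<in>g'" "w\<in>g" "w\<in>g'" shows False
proof -
  have gg: "g \<noteq> g'" using cyc2[of E v v' e g] assms by blast
  show False
  proof (cases "w \<in> e")
    case True
    then show ?thesis using G1[OF ac, of e g v w] G1[OF ac, of e g' v' w] assms by auto
  next
    case False
    show ?thesis using cyc3[OF ac, of v v' w e g' g] assms gg False by auto
  qed
qed

lemma G3: assumes "hg_acyclic E" "u\<in>e" "w\<in>e" "u\<noteq>w" "u\<in>f" "w\<in>f" "f\<in>E" "e\<in>E" "f\<noteq>e" shows False
  using cyc2[of E u w e f] assms by blast

lemma G4: assumes ac: "hg_acyclic E" and "u\<in>e" "w\<in>g" "v\<in>e" "v\<in>g" "g\<noteq>e" "u\<noteq>w" "u\<in>f" "w\<in>f"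
  "f\<noteq>e" "f\<noteq>g" "e\<in>E" "g\<in>E" "f\<in>E" shows False
proof (cases "w \<in> e")
  case True thus ?thesis using G3[OF ac, of u e w f] assms by blast
next
  case False
  show ?thesis
  proof (cases "u = v")
    case True thus ?thesis using cyc2[OF ac, of v w g f] assms False by auto
  next
    case uv: False
    show ?thesis using cyc3[OF ac, of u v w e g f] assms False uv by auto
  qed
qed

lemma G5: assumes "hg_acyclic E" "u\<in>g" "w\<in>g" "u\<noteq>w" "u\<in>f" "w\<in>f" "f\<in>E" "g\<in>E" "f\<noteq>g" shows False
  using cyc2[of E u w g f] assms by blast

lemma G6: assumes ac: "hg_acyclic E" and "v\<noteq>v'" "v\<in>e" "v'\<in>e" "v\<in>g" "v'\<in>g'" "g\<noteq>e" "g'\<noteq>e"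
  "u\<in>g" "w\<in>g'" "u\<noteq>w" "u\<in>f" "w\<in>f" "f\<noteq>e" "f\<noteq>g" "f\<noteq>g'" "e\<in>E" "g\<in>E" "g'\<in>E" "f\<in>E"
  shows False
proof (cases "u \<in> e")
  case True thus ?thesis using G4[OF ac, of u e w g' v' f] assms by blast
next
  case ue: False
  show ?thesis
  proof (cases "w \<in> e")
    case True thus ?thesis using G4[OF ac, of w e u g v f] assms by metis
  next
    case we: False
    have gg: "g \<noteq> g'" using cyc2[of E v v' e g] assms by blast
    show ?thesis using cyc4[OF ac, of u v v' w g e g' f] assms ue we gg by auto
  qed
qed

lemma two_elems: assumes "card A \<ge> 2" obtains u w where "u \<in> A" "w \<in> A" "u \<noteq> w"
proof -
  have "A \<noteq> {}" using assms by auto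
  then obtain u where u: "u \<in> A" by blast
  have "finite A" using assms card.infinite by fastforce
  hence "card (A - {u}) \<ge> 1" using assms u by simp
  hence "A - {u} \<noteq> {}" by (metis card.empty not_one_le_zero)
  then obtain w where "w \<in> A - {u}" by blast
  thus ?thesis using u that by blast
qed

definition xv :: "complex \<Rightarrow> 'a set \<Rightarrow> 'a set \<Rightarrow> 'a set \<Rightarrow> 'a \<Rightarrow> complex" where
  "xv s e C L w = (if w \<in> C then s^3 else if w \<in> e then s^2 else if w \<in> L then 1 else 0)"

locale cfg =
  fixes k :: nat and V :: "'a set" and E e v1 v2 v3 f1 f2 f3
  assumes U: "uniform_hypergraph k V E" and k3: "k \<ge> 3" and ac: "hg_acyclic E"
   and eE: "e \<in> E" and ve: "v1 \<in> e" "v2 \<in> e" "v3 \<in> e" and vd: "v1\<noteq>v2" "v1\<noteq>v3" "v2\<noteq>v3"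
   and fE: "f1\<in>E" "f2\<in>E" "f3\<in>E" and fne: "f1\<noteq>e" "f2\<noteq>e" "f3\<noteq>e" and vf: "v1\<in>f1" "v2\<in>f2" "v3\<in>f3"
begin

lemma perm2: "cfg k V E e v2 v1 v3 f2 f1 f3"
  using U k3 ac eE ve vd fE fne vf by unfold_locales auto
lemma perm3: "cfg k V E e v3 v2 v1 f3 f2 f1"
  using U k3 ac eE ve vd fE fne vf by unfold_locales auto

lemma fV: "finite V" using U by (simp add: uniform_hypergraph_def)
lemma EV: "f \<in> E \<Longrightarrow> f \<subseteq> V \<and> card f = k" using U by (simp add: uniform_hypergraph_def)
lemma finE: "finite E" using fV EV by (meson Pow_iff finite_Pow_iff rev_finite_subset subsetI)
lemma finEl: "f \<in> E \<Longrightarrow> finite f" using EV fV finite_subset by blast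

lemma fe1: "w \<in> f1 \<Longrightarrow> w \<in> e \<Longrightarrow> w = v1" using G1[OF ac eE fE(1) fne(1) ve(1) vf(1)] by blast
lemma fe2: "w \<in> f2 \<Longrightarrow> w \<in> e \<Longrightarrow> w = v2" using G1[OF ac eE fE(2) fne(2) ve(2) vf(2)] by blast
lemma fe3: "w \<in> f3 \<Longrightarrow> w \<in> e \<Longrightarrow> w = v3" using G1[OF ac eE fE(3) fne(3) ve(3) vf(3)] by blast
lemma f12: "w \<in> f1 \<Longrightarrow> w \<in> f2 \<Longrightarrow> False" using G2[OF ac vd(1) ve(1,2) eE fE(1,2) fne(1,2) vf(1,2)] by blast
lemma f13: "w \<in> f1 \<Longrightarrow> w \<in> f3 \<Longrightarrow> False" using G2[OF ac vd(2) ve(1,3) eE fE(1,3) fne(1,3) vf(1,3)] by blast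
lemma f23: "w \<in> f2 \<Longrightarrow> w \<in> f3 \<Longrightarrow> False" using G2[OF ac vd(3) ve(2,3) eE fE(2,3) fne(2,3) vf(2,3)] by blast
lemma fdist: "f1 \<noteq> f2" "f1 \<noteq> f3" "f2 \<noteq> f3" using f12 f13 f23 vf by blast+

lemma outside:
  assumes f: "f \<in> E" "f \<notin> {e,f1,f2,f3}" and uw: "u \<in> f" "w \<in> f" "u \<in> e \<union> f1 \<union> f2 \<union> f3" "w \<in> e \<union> f1 \<union> f2 \<union> f3"
  shows "u = w"
proof (rule ccontr)
  assume n: "u \<noteq> w"
  have fn: "f \<noteq> e" "f \<noteq> f1" "f \<noteq> f2" "f \<noteq> f3" using f by auto
  have n': "w \<noteq> u" using n by auto
  have a1: "u \<in> e \<Longrightarrow> w \<in> e \<Longrightarrow> False" using G3[OF ac _ _ n uw(1,2) f(1) eE fn(1)] by blast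
  have a2: "u \<in> e \<Longrightarrow> w \<in> f1 \<Longrightarrow> False" using G4[OF ac _ _ ve(1) vf(1) fne(1) n uw(1,2) fn(1) fn(2) eE fE(1) f(1)] by blast
  have a3: "u \<in> e \<Longrightarrow> w \<in> f2 \<Longrightarrow> False" using G4[OF ac _ _ ve(2) vf(2) fne(2) n uw(1,2) fn(1) fn(3) eE fE(2) f(1)] by blast
  have a4: "u \<in> e \<Longrightarrow> w \<in> f3 \<Longrightarrow> False" using G4[OF ac _ _ ve(3) vf(3) fne(3) n uw(1,2) fn(1) fn(4) eE fE(3) f(1)] by blast
  have b2: "w \<in> e \<Longrightarrow> u \<in> f1 \<Longrightarrow> False" using G4[OF ac _ _ ve(1) vf(1) fne(1) n' uw(2,1) fn(1) fn(2) eE fE(1) f(1)] by blast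
  have b3: "w \<in> e \<Longrightarrow> u \<in> f2 \<Longrightarrow> False" using G4[OF ac _ _ ve(2) vf(2) fne(2) n' uw(2,1) fn(1) fn(3) eE fE(2) f(1)] by blast
  have b4: "w \<in> e \<Longrightarrow> u \<in> f3 \<Longrightarrow> False" using G4[OF ac _ _ ve(3) vf(3) fne(3) n' uw(2,1) fn(1) fn(4) eE fE(3) f(1)] by blast
  have c1: "u \<in> f1 \<Longrightarrow> w \<in> f1 \<Longrightarrow> False" using G5[OF ac _ _ n uw(1,2) f(1) fE(1) fn(2)] by blast
  have c2: "u \<in> f2 \<Longrightarrow> w \<in> f2 \<Longrightarrow> False" using G5[OF ac _ _ n uw(1,2) f(1) fE(2) fn(3)] by blast
  have c3: "u \<in> f3 \<Longrightarrow> w \<in> f3 \<Longrightarrow> False" using G5[OF ac _ _ n uw(1,2) f(1) fE(3) fn(4)] by blast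
  have d12: "u \<in> f1 \<Longrightarrow> w \<in> f2 \<Longrightarrow> False" using G6[OF ac vd(1) ve(1,2) vf(1,2) fne(1,2) _ _ n uw(1,2) fn(1,2,3) eE fE(1,2) f(1)] by blast
  have d13: "u \<in> f1 \<Longrightarrow> w \<in> f3 \<Longrightarrow> False" using G6[OF ac vd(2) ve(1,3) vf(1,3) fne(1,3) _ _ n uw(1,2) fn(1,2,4) eE fE(1,3) f(1)] by blast
  have d23: "u \<in> f2 \<Longrightarrow> w \<in> f3 \<Longrightarrow> False" using G6[OF ac vd(3) ve(2,3) vf(2,3) fne(2,3) _ _ n uw(1,2) fn(1,3,4) eE fE(2,3) f(1)] by blast
  have d21: "w \<in> f1 \<Longrightarrow> u \<in> f2 \<Longrightarrow> False" using G6[OF ac vd(1) ve(1,2) vf(1,2) fne(1,2) _ _ n' uw(2,1) fn(1,2,3) eE fE(1,2) f(1)] by blast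
  have d31: "w \<in> f1 \<Longrightarrow> u \<in> f3 \<Longrightarrow> False" using G6[OF ac vd(2) ve(1,3) vf(1,3) fne(1,3) _ _ n' uw(2,1) fn(1,2,4) eE fE(1,3) f(1)] by blast
  have d32: "w \<in> f2 \<Longrightarrow> u \<in> f3 \<Longrightarrow> False" using G6[OF ac vd(3) ve(2,3) vf(2,3) fne(2,3) _ _ n' uw(2,1) fn(1,3,4) eE fE(2,3) f(1)] by blast
  show False using uw(3,4) a1 a2 a3 a4 b2 b3 b4 c1 c2 c3 d12 d13 d23 d21 d31 d32 by blast
qed

abbreviation "C \<equiv> {v1,v2,v3}"
abbreviation "X s \<equiv> xv s e C (f1 \<union> f2 \<union> f3)"

lemma zero_out: assumes "j \<notin> e \<union> f1 \<union> f2 \<union> f3" shows "X s j = 0"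
  using assms ve by (auto simp: xv_def)

lemma other_edges_zero:
  assumes f: "f \<in> E" "f \<notin> {e,f1,f2,f3}" and j: "j \<in> f"
  shows "(\<Prod>v\<in>f-{j}. X s v) = 0"
proof -
  have fin: "finite f" using finEl f by blast
  have "card (f - {j}) = k - 1" using EV[OF f(1)] fin j by simp
  hence "card (f - {j}) \<ge> 2" using k3 by simp
  then obtain u w where uw: "u \<in> f - {j}" "w \<in> f - {j}" "u \<noteq> w" by (rule two_elems)
  have "u \<notin> e \<union> f1 \<union> f2 \<union> f3 \<or> w \<notin> e \<union> f1 \<union> f2 \<union> f3"
    using outside[OF f, of u w] uw by blast
  then obtain y where "y \<in> f - {j}" "X s y = 0" using uw zero_out by blast
  thus ?thesis using fin by (intro prod_zero) auto
qed

lemma nbsum_local: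
  "nbsum E (X s) j = (\<Sum>f\<in>{f\<in>{e,f1,f2,f3}. j \<in> f}. \<Prod>v\<in>f-{j}. X s v)"
  unfolding nbsum_def
  by (rule sum.mono_neutral_right) (use finE eE fE other_edges_zero in auto)

lemma eq_v1: "nbsum E (X s) v1 = 1 + s^6 * (s^2)^(k-3)"
proof -
  have n2: "v1 \<notin> f2" using fe2[of v1] ve(1) vd(1) by blast
  have n3: "v1 \<notin> f3" using fe3[of v1] ve(1) vd(2) by blast
  have set: "{f\<in>{e,f1,f2,f3}. v1 \<in> f} = {e, f1}"
    using ve(1) vf(1) n2 n3 by blast
  have fin: "finite e" using finEl eE by blast
  have eq: "e - {v1} = {v2,v3} \<union> (e - C)" using ve vd by auto
  have "(\<Prod>v\<in>e-{v1}. X s v) = (\<Prod>v\<in>{v2,v3} \<union> (e - C). X s v)" by (simp only: eq)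
  also have "\<dots> = (\<Prod>v\<in>{v2,v3}. X s v) * (\<Prod>v\<in>e - C. X s v)"
    using fin by (intro prod.union_disjoint) auto
  also have "(\<Prod>v\<in>{v2,v3}. X s v) = s^6" using vd by (simp add: xv_def power_add[symmetric])
  also have "(\<Prod>v\<in>e - C. X s v) = (\<Prod>v\<in>e - C. s^2)" by (rule prod.cong) (auto simp: xv_def)
  also have "\<dots> = (s^2)^(k-3)"
  proof -
    have "card (e - C) = card e - card C" using ve by (intro card_Diff_subset) auto
    moreover have "card C = 3" using vd by simp
    ultimately have "card (e - C) = k - 3" using EV[OF eE] by simp
    thus ?thesis by simp
  qed
  finally have 1: "(\<Prod>v\<in>e-{v1}. X s v) = s^6 * (s^2)^(k-3)" .
  have 2: "(\<Prod>v\<in>f1-{v1}. X s v) = 1"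
    by (rule prod.neutral) (use fe1 ve vd in \<open>auto simp: xv_def\<close>)
  show ?thesis unfolding nbsum_local set using 1 2 fne(1) by simp
qed

lemma eq_leaf1: assumes u: "u \<in> f1" "u \<noteq> v1" shows "nbsum E (X s) u = s^3"
proof -
  have ue: "u \<notin> e" using fe1 u by blast
  have n2: "u \<notin> f2" using f12[of u] u(1) by blast
  have n3: "u \<notin> f3" using f13[of u] u(1) by blast
  have set: "{f\<in>{e,f1,f2,f3}. u \<in> f} = {f1}"
    using u(1) ue n2 n3 by blast
  have fin: "finite f1" using finEl fE by blast
  have "f1 - {u} = insert v1 (f1 - {u, v1})" using u vf by auto
  hence "(\<Prod>v\<in>f1-{u}. X s v) = X s v1 * (\<Prod>v\<in>f1 - {u,v1}. X s v)"
    using fin by simp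
  also have "(\<Prod>v\<in>f1 - {u,v1}. X s v) = 1"
    by (rule prod.neutral) (use fe1 ve vd in \<open>auto simp: xv_def\<close>)
  finally show ?thesis unfolding nbsum_local set by (simp add: xv_def)
qed

lemma eq_eleaf: assumes u: "u \<in> e" "u \<notin> C" shows "nbsum E (X s) u = s^9 * (s^2)^(k-4)"
proof -
  have n1: "u \<notin> f1" using fe1[of u] u by blast
  have n2: "u \<notin> f2" using fe2[of u] u by blast
  have n3: "u \<notin> f3" using fe3[of u] u by blast
  have set: "{f\<in>{e,f1,f2,f3}. u \<in> f} = {e}"
    using u(1) n1 n2 n3 by blast
  have fin: "finite e" using finEl eE by blast
  have eq: "e - {u} = C \<union> (e - C - {u})" using ve u by auto
  have "(\<Prod>v\<in>e-{u}. X s v) = (\<Prod>v\<in>C \<union> (e - C - {u}). X s v)" by (simp only: eq)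
  also have "\<dots> = (\<Prod>v\<in>C. X s v) * (\<Prod>v\<in>e - C - {u}. X s v)"
    using fin by (intro prod.union_disjoint) auto
  also have "(\<Prod>v\<in>C. X s v) = s^9" using vd by (simp add: xv_def power_add[symmetric])
  also have "(\<Prod>v\<in>e - C - {u}. X s v) = (\<Prod>v\<in>e - C - {u}. s^2)" by (rule prod.cong) (auto simp: xv_def)
  also have "\<dots> = (s^2)^(k-4)"
  proof -
    have "card (e - C - {u}) = card e - card (insert u C)"
      using ve u by (subst card_Diff_subset[symmetric]) (auto intro: arg_cong[where f=card])
    moreover have "card (insert u C) = 4" using vd u by simp
    ultimately have "card (e - C - {u}) = k - 4" using EV[OF eE] by simp
    thus ?thesis by simp
  qed
  finally show ?thesis unfolding nbsum_local set by simp
qed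

lemma eq_out: assumes u: "u \<notin> e \<union> f1 \<union> f2 \<union> f3" shows "nbsum E (X s) u = 0"
proof -
  have set: "{f\<in>{e,f1,f2,f3}. u \<in> f} = {}" using u by auto
  show ?thesis unfolding nbsum_local set by simp
qed

lemma X2: "xv s e {v2,v1,v3} (f2 \<union> f1 \<union> f3) = X s"
  by (rule ext) (auto simp: xv_def)
lemma X3: "xv s e {v3,v2,v1} (f3 \<union> f2 \<union> f1) = X s"
  by (rule ext) (auto simp: xv_def)

lemma eigen_exists: "\<exists>lam. is_eigenvalue k V E lam \<and> lam ^ k \<notin> \<real>"
proof -
  obtain z :: complex where z: "z^3 = z^2 + 1" "z^3 \<notin> \<real>" using cubic_root_nonreal by blast
  have kp: "k > 0" using k3 by simp
  have k1: "1 \<le> k" using k3 by simp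
  obtain s where s: "s ^ k = z" using complex_nth_root_ex[OF kp] by blast
  have z0: "z \<noteq> 0" using z by auto
  have s0: "s \<noteq> 0" using s z0 kp by auto
  define lam where "lam = s^3"
  have lk: "lam ^ k = z^3" unfolding lam_def s[symmetric] by (simp add: power_mult[symmetric] mult.commute)
  have Cv: "C \<subseteq> V" using ve EV[OF eE] by auto
  have "is_eigenvalue k V E lam"
    unfolding is_eigenvalue_edge[OF U k1]
  proof (intro exI[of _ "X s"] conjI bexI[of _ v1] ballI)
    show "X s v1 \<noteq> 0" using s0 by (simp add: xv_def)
    show "v1 \<in> V" using Cv by auto
  next
    fix j assume jV: "j \<in> V"
    have vcase: "1 + s^6 * (s^2)^(k-3) = lam * (s^3)^(k-1)"
    proof -
      have "s^6 * (s^2)^(k-3) = (s^2)^(k-3+3)" by (simp add: power_add power_mult[symmetric])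
      also have "\<dots> = z^2" using k3 by (simp add: s[symmetric] power_mult[symmetric] mult.commute)
      finally have 1: "s^6 * (s^2)^(k-3) = z^2" .
      have "lam * (s^3)^(k-1) = (s^3)^(k-1+1)" by (simp add: lam_def)
      also have "\<dots> = z^3" using k3 by (simp add: s[symmetric] power_mult[symmetric] mult.commute)
      finally show ?thesis using 1 z by simp
    qed
    consider "j \<in> C" | "j \<in> e - C" | "j \<in> f1 - e" | "j \<in> f2 - e" | "j \<in> f3 - e"
      | "j \<notin> e \<union> f1 \<union> f2 \<union> f3" by blast
    then show "nbsum E (X s) j = lam * X s j ^ (k - 1)"
    proof cases
      case 1
      then consider "j = v1" | "j = v2" | "j = v3" by blast
      then show ?thesis
      proof cases
        case 1 thus ?thesis using eq_v1 vcase by (simp add: xv_def)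
      next
        case 2 thus ?thesis using cfg.eq_v1[OF perm2, of s] vcase by (simp add: X2 xv_def)
      next
        case 3 thus ?thesis using cfg.eq_v1[OF perm3, of s] vcase by (simp add: X3 xv_def)
      qed
    next
      case 2
      have "card (insert j C) \<le> card e" using 2 ve finEl[OF eE] by (intro card_mono) auto
      moreover have "card (insert j C) = 4" using 2 vd by simp
      ultimately have k4: "k \<ge> 4" using EV[OF eE] by simp
      have "s^9 * (s^2)^(k-4) = lam * (s^2)^(k-1)"
      proof -
        have kk: "k - 1 = k - 4 + 3" using k4 by simp
        have "(s^2)^(k-1) = (s^2)^(k-4+3)" by (simp only: kk)
        thus ?thesis by (simp add: lam_def power_add power_mult[symmetric])
      qed
      thus ?thesis using eq_eleaf[of j s] 2 by (simp add: xv_def)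
    next
      case 3
      have "j \<notin> C" using 3 ve by auto
      thus ?thesis using eq_leaf1[of j s] 3 vf by (auto simp: xv_def lam_def)
    next
      case 4
      have "j \<notin> C" using 4 ve by auto
      thus ?thesis using cfg.eq_leaf1[OF perm2, of j s] 4 vf by (auto simp: X2 xv_def lam_def)
    next
      case 5
      have "j \<notin> C" using 5 ve by auto
      thus ?thesis using cfg.eq_leaf1[OF perm3, of j s] 5 vf by (auto simp: X3 xv_def lam_def)
    next
      case 6
      thus ?thesis using eq_out[of j s] k3 zero_out[OF 6, of s] by simp
    qed
  qed
  thus ?thesis using lk z by (intro exI[of _ lam]) simp
qed

end


lemma nbsum_transfer:
  assumes bij: "bij_betw f V V'" and E': "E' = (\<lambda>e. f ` e) ` E" and EV: "\<forall>e\<in>E. e \<subseteq> V"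
    and j: "j \<in> V"
  shows "nbsum E' (x \<circ> inv_into V f) (f j) = nbsum E x j"
proof -
  have inj: "inj_on f V" using bij_betw_imp_inj_on[OF bij] .
  have iv: "\<And>u. u \<in> V \<Longrightarrow> (x \<circ> inv_into V f) (f u) = x u" using inj by simp
  have mem: "\<And>e. e \<in> E \<Longrightarrow> f j \<in> f ` e \<longleftrightarrow> j \<in> e"
    using inj EV j by (meson inj_on_image_mem_iff)
  have set: "{e'\<in>E'. f j \<in> e'} = (\<lambda>e. f ` e) ` {e\<in>E. j \<in> e}" using mem E' by auto
  have injE: "inj_on (\<lambda>e. f ` e) {e\<in>E. j \<in> e}"
    using inj EV by (auto simp: inj_on_def inj_on_image_eq_iff)
  have "nbsum E' (x \<circ> inv_into V f) (f j) = (\<Sum>e\<in>{e\<in>E. j \<in> e}. \<Prod>v\<in>f ` e - {f j}. (x \<circ> inv_into V f) v)"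
    unfolding nbsum_def set by (simp add: sum.reindex[OF injE])
  also have "\<dots> = (\<Sum>e\<in>{e\<in>E. j \<in> e}. \<Prod>v\<in>e - {j}. x v)"
  proof (rule sum.cong[OF refl])
    fix e assume e: "e \<in> {e\<in>E. j \<in> e}"
    have eV: "e \<subseteq> V" using e EV by auto
    have "f ` e - {f j} = f ` (e - {j})" using inj eV j by (auto simp: inj_on_def)
    moreover have "inj_on f (e - {j})" using inj eV by (meson Diff_subset inj_on_subset subset_trans)
    ultimately show "(\<Prod>v\<in>f ` e - {f j}. (x \<circ> inv_into V f) v) = (\<Prod>v\<in>e - {j}. x v)"
      using iv eV by (simp add: prod.reindex subset_iff)
  qed
  finally show ?thesis by (simp add: nbsum_def)
qed

lemma eig_transfer:
  assumes bij: "bij_betw f V V'" and E': "E' = (\<lambda>e. f ` e) ` E" and EV: "\<forall>e\<in>E. e \<subseteq> V"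
    and x: "\<exists>v\<in>V. x v \<noteq> 0" "\<forall>j\<in>V. nbsum E x j = lam * x j ^ (k-1)"
  shows "\<exists>x'. (\<exists>v\<in>V'. x' v \<noteq> 0) \<and> (\<forall>j\<in>V'. nbsum E' x' j = lam * x' j ^ (k-1))"
proof (intro exI[of _ "x \<circ> inv_into V f"] conjI ballI)
  have inj: "inj_on f V" using bij_betw_imp_inj_on[OF bij] .
  have im: "f ` V = V'" using bij_betw_imp_surj_on[OF bij] .
  obtain v where v: "v \<in> V" "x v \<noteq> 0" using x by blast
  show "\<exists>v\<in>V'. (x \<circ> inv_into V f) v \<noteq> 0"
    using v inj im by (intro bexI[of _ "f v"]) auto
  fix j' assume "j' \<in> V'"
  then obtain j where j: "j \<in> V" "j' = f j" using im by blast
  show "nbsum E' (x \<circ> inv_into V f) j' = lam * (x \<circ> inv_into V f) j' ^ (k - 1)"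
    using nbsum_transfer[OF bij E' EV j(1), of x] x(2) j inj by simp
qed


lemma real_sum_conj: "c + cnj c \<in> \<real>"
  by (simp add: complex_is_Real_iff)

lemma power_real:
  fixes W :: "'a set" and F :: "'a set set" and y :: "'a + 'a set \<times> nat \<Rightarrow> complex"
  assumes k3: "k \<ge> 3" and fW: "finite W" and FW: "\<forall>e\<in>F. e \<subseteq> W \<and> card e = 2"
    and ynz: "\<exists>v\<in>power_vertices k W F. y v \<noteq> 0"
    and eq: "\<forall>j\<in>power_vertices k W F. nbsum (power_edges k F) y j = lam * y j ^ (k-1)"
  shows "lam ^ k \<in> \<real>"
proof (cases "lam = 0")
  case True thus ?thesis using k3 by simp
next
  case lam0: False
  define ed where "ed e = Inl ` e \<union> {Inr (e, j) | j. j < k - 2}" for e :: "'a set"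
  have PE: "power_edges k F = ed ` F" by (simp add: power_edges_def ed_def)
  have fF: "finite F" using fW FW by (meson Pow_iff finite_Pow_iff rev_finite_subset subsetI)
  have finE: "\<And>e. e \<in> F \<Longrightarrow> finite e" using FW fW finite_subset by blast
  have edR: "{Inr (e, j) | j. j < k - 2} = (\<lambda>j. Inr (e, j)) ` {..<k-2}" for e :: "'a set" by auto
  have fined: "\<And>e. e \<in> F \<Longrightarrow> finite (ed e)" using finE by (simp add: ed_def edR)
  have injed: "inj_on ed F"
  proof (rule inj_onI)
    fix e e' assume "e \<in> F" "e' \<in> F" "ed e = ed e'"
    moreover have "Inr (e, 0) \<in> ed e" using k3 by (simp add: ed_def)
    ultimately show "e = e'" by (auto simp: ed_def)
  qed
  have PV: "power_vertices k W F = Inl ` W \<union> {Inr (e, j) | e j. e \<in> F \<and> j < k - 2}"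
    by (simp add: power_vertices_def)
  define P where "P e = (\<Prod>v\<in>ed e. y v)" for e
  have leaf: "lam * y (Inr (e, j)) ^ k = P e" if e: "e \<in> F" and j: "j < k - 2" for e j
  proof -
    have set: "{e'\<in>power_edges k F. Inr (e, j) \<in> e'} = {ed e}" using e j
      by (auto simp: PE ed_def)
    have "nbsum (power_edges k F) y (Inr (e, j)) = (\<Prod>v\<in>ed e - {Inr (e,j)}. y v)"
      by (simp add: nbsum_def set)
    moreover have "Inr (e, j) \<in> power_vertices k W F" using e j by (simp add: PV)
    ultimately have 1: "(\<Prod>v\<in>ed e - {Inr (e,j)}. y v) = lam * y (Inr (e, j)) ^ (k-1)" using eq by simp
    have "P e = y (Inr (e,j)) * (\<Prod>v\<in>ed e - {Inr (e,j)}. y v)"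
      unfolding P_def using fined[OF e] j by (intro prod.remove) (auto simp: ed_def)
    also have "\<dots> = lam * y (Inr (e, j)) ^ (k-1+1)" using 1 by simp
    finally show ?thesis using k3 by simp
  qed
  have core: "(\<Sum>e\<in>{e\<in>F. a \<in> e}. P e) = lam * y (Inl a) ^ k" if a: "a \<in> W" for a
  proof -
    have set: "{e'\<in>power_edges k F. Inl a \<in> e'} = ed ` {e\<in>F. a \<in> e}"
      by (auto simp: PE ed_def)
    have inj2: "inj_on ed {e\<in>F. a \<in> e}" using injed by (rule inj_on_subset) auto
    have "nbsum (power_edges k F) y (Inl a) = (\<Sum>e\<in>{e\<in>F. a \<in> e}. \<Prod>v\<in>ed e - {Inl a}. y v)"
      unfolding nbsum_def set by (simp add: sum.reindex[OF inj2])
    moreover have "Inl a \<in> power_vertices k W F" using a by (simp add: PV)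
    ultimately have 1: "(\<Sum>e\<in>{e\<in>F. a \<in> e}. \<Prod>v\<in>ed e - {Inl a}. y v) = lam * y (Inl a) ^ (k-1)"
      using eq by simp
    have "(\<Sum>e\<in>{e\<in>F. a \<in> e}. P e) = (\<Sum>e\<in>{e\<in>F. a \<in> e}. y (Inl a) * (\<Prod>v\<in>ed e - {Inl a}. y v))"
      unfolding P_def using fined by (intro sum.cong refl prod.remove) (auto simp: ed_def)
    also have "\<dots> = y (Inl a) * (lam * y (Inl a) ^ (k-1))" using 1 by (simp flip: sum_distrib_left)
    also have "\<dots> = lam * y (Inl a) ^ (k-1+1)" by simp
    finally show ?thesis using k3 by simp
  qed
  have Pdec: "P e = (\<Prod>a\<in>e. y (Inl a)) * (\<Prod>j<k-2. y (Inr (e, j)))" if e: "e \<in> F" for e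
  proof -
    have "P e = (\<Prod>v\<in>Inl ` e. y v) * (\<Prod>v\<in>(\<lambda>j. Inr (e, j)) ` {..<k-2}. y v)"
      unfolding P_def ed_def edR using finE[OF e] by (intro prod.union_disjoint) auto
    also have "\<dots> = (\<Prod>a\<in>e. y (Inl a)) * (\<Prod>j<k-2. y (Inr (e, j)))"
      by (simp add: prod.reindex inj_on_def)
    finally show ?thesis .
  qed
  define mu where "mu = lam ^ k"
  define t where "t e = P e / lam" for e
  define w where "w a = y (Inl a) ^ k" for a
  have tsum: "(\<Sum>e\<in>{e\<in>F. a \<in> e}. t e) = w a" if "a \<in> W" for a
    using core[OF that] lam0 by (simp add: t_def w_def sum_divide_distrib[symmetric])
  have tq: "mu * t e ^ 2 = (\<Prod>a\<in>e. w a)" if e: "e \<in> F" and Pn: "P e \<noteq> 0" for e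
  proof -
    have "lam ^ (k-2) * (\<Prod>j<k-2. y (Inr (e, j)) ^ k) = (\<Prod>j<k-2. lam * y (Inr (e, j)) ^ k)"
      by (simp add: prod.distrib)
    also have "\<dots> = P e ^ (k-2)" using leaf[OF e] by simp
    finally have 1: "lam ^ (k-2) * (\<Prod>j<k-2. y (Inr (e, j)) ^ k) = P e ^ (k-2)" .
    have "lam ^ (k-2) * P e ^ k = (\<Prod>a\<in>e. w a) * (lam ^ (k-2) * (\<Prod>j<k-2. y (Inr (e, j)) ^ k))"
      unfolding Pdec[OF e] w_def by (simp add: power_mult_distrib prod_power_distrib)
    also have "\<dots> = (\<Prod>a\<in>e. w a) * P e ^ (k-2)" using 1 by simp
    finally have 2: "lam ^ (k-2) * P e ^ k = (\<Prod>a\<in>e. w a) * P e ^ (k-2)" .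
    have kk: "k = 2 + (k-2)" using k3 by simp
    have "P e ^ k = P e ^ 2 * P e ^ (k-2)" by (subst kk, subst power_add) simp
    hence "(lam ^ (k-2) * P e ^ 2) * P e ^ (k-2) = (\<Prod>a\<in>e. w a) * P e ^ (k-2)" using 2 by (simp add: mult.assoc)
    hence 3: "lam ^ (k-2) * P e ^ 2 = (\<Prod>a\<in>e. w a)" using Pn by simp
    have lk: "lam ^ k = lam ^ (k-2) * lam ^ 2" by (subst kk, subst power_add) simp
    have "mu * t e ^ 2 = lam ^ (k-2) * lam^2 * P e ^ 2 / lam ^ 2"
      unfolding mu_def t_def lk by (simp add: power_divide)
    also have "\<dots> = lam ^ (k-2) * P e ^ 2" using lam0 by simp
    finally show ?thesis using 3 by simp
  qed
  define sg where "sg = csqrt mu"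
  define sq where "sq a = csqrt (w a)" for a
  define g where "g a = cnj (sq a) / sq a" for a
  have gw: "g a * w a = of_real (cmod (sq a) ^ 2)" for a
  proof -
    have "w a = sq a ^ 2" by (simp add: sq_def)
    hence "g a * w a = cnj (sq a) * sq a" by (cases "sq a = 0") (simp_all add: g_def power2_eq_square)
    also have "\<dots> = of_real (cmod (sq a) ^ 2)" by (metis complex_norm_square mult.commute of_real_power)
    finally show ?thesis .
  qed
  define R where "R = (\<Sum>a\<in>W. cmod (sq a) ^ 2)"
  have "sg * of_real R = (\<Sum>a\<in>W. g a * (sg * w a))"
    unfolding R_def of_real_sum sum_distrib_left using gw by (intro sum.cong refl) (simp add: ac_simps)
  also have "\<dots> = (\<Sum>a\<in>W. \<Sum>e\<in>{e\<in>F. a \<in> e}. g a * sg * t e)"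
  proof (rule sum.cong[OF refl])
    fix a assume a: "a \<in> W"
    have "(\<Sum>e\<in>{e\<in>F. a \<in> e}. g a * sg * t e) = g a * sg * (\<Sum>e\<in>{e\<in>F. a \<in> e}. t e)"
      by (simp add: sum_distrib_left)
    thus "g a * (sg * w a) = (\<Sum>e\<in>{e\<in>F. a \<in> e}. g a * sg * t e)" using tsum[OF a] by simp
  qed
  also have "\<dots> = (\<Sum>e\<in>F. \<Sum>a\<in>{a\<in>W. a \<in> e}. g a * sg * t e)"
    by (rule sum.swap_restrict[OF fW fF])
  also have "\<dots> = (\<Sum>e\<in>F. \<Sum>a\<in>e. g a * sg * t e)"
  proof (rule sum.cong[OF refl])
    fix e assume "e \<in> F"
    hence "{a\<in>W. a \<in> e} = e" using FW by auto
    thus "(\<Sum>a\<in>{a\<in>W. a \<in> e}. g a * sg * t e) = (\<Sum>a\<in>e. g a * sg * t e)" by simp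
  qed
  finally have SR: "sg * of_real R = (\<Sum>e\<in>F. \<Sum>a\<in>e. g a * sg * t e)" .
  have Qreal: "(\<Sum>a\<in>e. g a * sg * t e) \<in> \<real>" if e: "e \<in> F" for e
  proof (cases "P e = 0")
    case True thus ?thesis by (simp add: t_def)
  next
    case Pn: False
    obtain a b where ab: "a \<noteq> b" "e = {a, b}" using FW e card_2_iff by metis
    have "mu * t e ^ 2 = w a * w b" using tq[OF e Pn] ab by simp
    hence "(sg * t e)^2 = (sq a * sq b)^2"
      by (simp add: sg_def sq_def power_mult_distrib)
    hence pm: "sg * t e = sq a * sq b \<or> sg * t e = - (sq a * sq b)"
      by (simp add: power2_eq_iff)
    have wn: "w a * w b \<noteq> 0"
    proof
      assume "w a * w b = 0"
      hence "mu * t e ^ 2 = 0" using \<open>mu * t e ^ 2 = w a * w b\<close> by simp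
      moreover have "mu \<noteq> 0" using lam0 by (simp add: mu_def)
      moreover have "t e \<noteq> 0" using Pn lam0 by (simp add: t_def)
      ultimately show False by simp
    qed
    hence sqn: "sq a \<noteq> 0" "sq b \<noteq> 0" by (auto simp: sq_def)
    have key: "sq a * sq b * (g a + g b) = cnj (sq a) * sq b + cnj (cnj (sq a) * sq b)"
      using sqn by (simp add: g_def field_simps)
    have "(\<Sum>a\<in>e. g a * sg * t e) = (sg * t e) * (g a + g b)"
      using ab by (simp add: algebra_simps)
    moreover have "sq a * sq b * (g a + g b) \<in> \<real>" unfolding key by (rule real_sum_conj)
    ultimately show ?thesis using pm by (auto simp del: complex_cnj_mult)
  qed
  have SRr: "sg * of_real R \<in> \<real>" unfolding SR by (rule sum_in_Reals) (use Qreal in auto)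
  have Rpos: "R > 0"
  proof -
    have "\<exists>a\<in>W. y (Inl a) \<noteq> 0"
    proof (rule ccontr)
      assume "\<not> (\<exists>a\<in>W. y (Inl a) \<noteq> 0)"
      hence z: "\<forall>a\<in>W. y (Inl a) = 0" by blast
      have "P e = 0" if "e \<in> F" for e
      proof -
        have c2: "card e = 2" using FW that by blast
        then obtain a b where ab: "a \<noteq> b" "e = {a,b}" by (auto simp: card_2_iff)
        have aW: "a \<in> W" using FW that ab(2) by blast
        have ya: "y (Inl a) = 0" using z aW by blast
        have "(\<Prod>x\<in>e. y (Inl x)) = y (Inl a) * y (Inl b)" using ab by simp
        also have "\<dots> = 0" using ya by simp
        finally show ?thesis by (simp add: Pdec[OF that])
      qed
      hence Pz: "\<And>e. e \<in> F \<Longrightarrow> P e = 0" by blast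
      have "y v = 0" if v: "v \<in> power_vertices k W F" for v
      proof -
        have "v \<in> Inl ` W \<or> (\<exists>e j. e \<in> F \<and> j < k - 2 \<and> v = Inr (e, j))"
          using v unfolding PV by blast
        thus ?thesis
        proof (elim disjE exE conjE)
          assume "v \<in> Inl ` W" thus ?thesis using z by auto
        next
          fix e j assume 2: "e \<in> F" "j < k - 2" "v = Inr (e, j)"
          have "lam * y (Inr (e, j)) ^ k = 0" using leaf[OF 2(1,2)] Pz[OF 2(1)] by simp
          thus ?thesis using lam0 2(3) by simp
        qed
      qed
      hence "\<forall>v\<in>power_vertices k W F. y v = 0" by blast
      thus False using ynz by blast
    qed
    then obtain a where a: "a \<in> W" "y (Inl a) \<noteq> 0" by blast
    have "sq a \<noteq> 0" using a by (simp add: sq_def w_def)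
    hence "cmod (sq a) ^ 2 > 0" by simp
    moreover have "cmod (sq a) ^ 2 \<le> R" unfolding R_def
      using a fW by (intro member_le_sum) auto
    moreover have "0 \<le> R" unfolding R_def by (intro sum_nonneg) auto
    ultimately show ?thesis by linarith
  qed
  have "sg \<in> \<real>"
  proof -
    have "sg = (sg * of_real R) / of_real R" using Rpos by simp
    also have "\<dots> \<in> \<real>" by (rule Reals_divide[OF SRr Reals_of_real])
    finally show ?thesis .
  qed
  hence "sg ^ 2 \<in> \<real>" by simp
  thus ?thesis by (simp add: sg_def mu_def)
qed


definition big :: "'a set set \<Rightarrow> 'a \<Rightarrow> bool" where
  "big E v \<longleftrightarrow> (\<exists>f\<in>E. \<exists>g\<in>E. f \<noteq> g \<and> v \<in> f \<and> v \<in> g)"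

locale nc =
  fixes k :: nat and V :: "'a set" and E :: "'a set set"
  assumes H: "hypertree k V E" and k3: "k \<ge> 3"
    and NC: "\<forall>e\<in>E. card {v\<in>e. big E v} \<le> 2"
begin

lemma U: "uniform_hypergraph k V E" using H by (simp add: hypertree_def)
lemma ac: "hg_acyclic E" using H by (simp add: hypertree_def)
lemma conn: "hg_connected V E" using H by (simp add: hypertree_def)
lemma fV: "finite V" using U by (simp add: uniform_hypergraph_def)
lemma EV: "e \<in> E \<Longrightarrow> e \<subseteq> V \<and> card e = k" using U by (simp add: uniform_hypergraph_def)
lemma finE: "finite E" using fV EV by (meson Pow_iff finite_Pow_iff rev_finite_subset subsetI)
lemma finEl: "e \<in> E \<Longrightarrow> finite e" using EV fV finite_subset by blast

definition c :: "'a set \<Rightarrow> 'a set" where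
  "c e = (SOME C. {v\<in>e. big E v} \<subseteq> C \<and> C \<subseteq> e \<and> card C = 2)"

lemma c_ex: assumes e: "e \<in> E" shows "{v\<in>e. big E v} \<subseteq> c e \<and> c e \<subseteq> e \<and> card (c e) = 2"
proof -
  have "\<exists>C. {v\<in>e. big E v} \<subseteq> C \<and> C \<subseteq> e \<and> card C = 2"
    using NC e EV[OF e] k3 finEl[OF e] by (intro exists_subset_between) auto
  thus ?thesis unfolding c_def by (rule someI_ex)
qed

lemma c_sub: "e \<in> E \<Longrightarrow> c e \<subseteq> e" using c_ex by blast
lemma c_card: "e \<in> E \<Longrightarrow> card (c e) = 2" using c_ex by blast
lemma c_big: "e \<in> E \<Longrightarrow> v \<in> e \<Longrightarrow> big E v \<Longrightarrow> v \<in> c e" using c_ex by blast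

lemma K1: assumes "e \<in> E" "v \<in> e" "v \<notin> c e" "e' \<in> E" "v \<in> e'" shows "e' = e"
  using assms c_big unfolding big_def by blast

lemma c_inj: "inj_on c E"
proof (rule inj_onI)
  fix e e' assume e: "e \<in> E" "e' \<in> E" "c e = c e'"
  obtain a b where ab: "c e = {a,b}" "a \<noteq> b" using c_card[OF e(1)] card_2_iff by metis
  show "e = e'"
  proof (rule ccontr)
    assume "e \<noteq> e'"
    thus False using cyc2[OF ac ab(2), of e e'] ab c_sub[OF e(1)] c_sub[OF e(2)] e by auto
  qed
qed

definition W :: "'a set" where "W = \<Union>(c ` E) \<union> {v\<in>V. \<forall>e\<in>E. v \<notin> e}"
definition F :: "'a set set" where "F = c ` E"

lemma K2: assumes "e \<in> E" "v \<in> e" "v \<notin> c e" shows "v \<notin> W"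
  using assms K1 c_sub unfolding W_def by blast

lemma K3: assumes "e \<in> E" "v \<in> e" "v \<in> W" shows "v \<in> c e"
proof -
  from assms(3) consider e' where "e' \<in> E" "v \<in> c e'" | "\<forall>e\<in>E. v \<notin> e" unfolding W_def by blast
  thus ?thesis
  proof cases
    case 1
    show ?thesis
    proof (cases "e' = e")
      case True thus ?thesis using 1 by simp
    next
      case False
      hence "big E v" unfolding big_def using 1 c_sub assms by blast
      thus ?thesis using c_big assms by blast
    qed
  next
    case 2 thus ?thesis using assms by blast
  qed
qed

lemma WV: "W \<subseteq> V" unfolding W_def using c_sub EV by blast

definition ev :: "'a \<Rightarrow> 'a set" where "ev v = (SOME e. e \<in> E \<and> v \<in> e)"

lemma ev_eq: assumes "e \<in> E" "v \<in> e" "v \<notin> c e" shows "ev v = e"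
proof -
  have ex: "\<exists>e. e \<in> E \<and> v \<in> e" using assms by blast
  have "ev v \<in> E \<and> v \<in> ev v" unfolding ev_def by (rule someI_ex[OF ex])
  thus ?thesis using K1[OF assms] by simp
qed

lemma K5: assumes "v \<in> V" "v \<notin> W" shows "ev v \<in> E" "v \<in> ev v" "v \<notin> c (ev v)"
proof -
  have "\<exists>e\<in>E. v \<in> e" using assms unfolding W_def by blast
  hence *: "ev v \<in> E \<and> v \<in> ev v" unfolding ev_def by (metis (mono_tags, lifting) someI_ex)
  thus "ev v \<in> E" "v \<in> ev v" by auto
  show "v \<notin> c (ev v)" using assms * unfolding W_def by blast
qed

definition gg :: "'a set \<Rightarrow> 'a \<Rightarrow> nat" where
  "gg e = (SOME h. bij_betw h (e - c e) {0..<card (e - c e)})"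

lemma gg_bij: assumes "e \<in> E" shows "bij_betw (gg e) (e - c e) {..<k-2}"
proof -
  have "bij_betw (gg e) (e - c e) {0..<card (e - c e)}"
    unfolding gg_def using ex_bij_betw_finite_nat[of "e - c e"] finEl[OF assms]
    by (metis (mono_tags, lifting) finite_Diff someI_ex)
  moreover have "card (e - c e) = k - 2"
    using card_Diff_subset[OF _ c_sub[OF assms]] c_card[OF assms] EV[OF assms] finEl[OF assms]
      finite_subset[OF c_sub[OF assms]] by simp
  ultimately show ?thesis by (simp add: atLeast0LessThan)
qed

definition fm :: "'a \<Rightarrow> 'a + 'a set \<times> nat" where
  "fm v = (if v \<in> W then Inl v else Inr (c (ev v), gg (ev v) v))"

definition ed :: "'a set \<Rightarrow> ('a + 'a set \<times> nat) set" where
  "ed C = Inl ` C \<union> {Inr (C, j) | j. j < k - 2}"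

lemma fm_edge: assumes e: "e \<in> E" shows "fm ` e = ed (c e)"
proof (intro set_eqI iffI)
  fix x assume "x \<in> fm ` e"
  then obtain v where v: "v \<in> e" "x = fm v" by blast
  show "x \<in> ed (c e)"
  proof (cases "v \<in> c e")
    case True
    hence "v \<in> W" using e unfolding W_def by blast
    thus ?thesis using v True by (simp add: fm_def ed_def)
  next
    case False
    have "v \<notin> W" using K2 e v False by blast
    moreover have "ev v = e" using ev_eq e v False by blast
    moreover have "gg e v < k - 2" using gg_bij[OF e] v False by (auto simp: bij_betw_def)
    ultimately show ?thesis using v by (simp add: fm_def ed_def)
  qed
next
  fix x assume x: "x \<in> ed (c e)"
  then consider a where "a \<in> c e" "x = Inl a" | j where "j < k - 2" "x = Inr (c e, j)"
    unfolding ed_def by blast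
  thus "x \<in> fm ` e"
  proof cases
    case 1
    hence "a \<in> W" using e unfolding W_def by blast
    thus ?thesis using 1 c_sub[OF e] by (auto simp: fm_def intro!: image_eqI[of _ _ a])
  next
    case 2
    then obtain v where v: "v \<in> e - c e" "gg e v = j" using gg_bij[OF e] 
      by (metis bij_betw_def imageE lessThan_iff)
    have "v \<notin> W" using K2 e v by blast
    moreover have "ev v = e" using ev_eq e v by blast
    ultimately have "fm v = x" using 2 v by (simp add: fm_def)
    thus ?thesis using v by blast
  qed
qed

lemma edges_iso: "(\<lambda>e. fm ` e) ` E = power_edges k F"
proof -
  have "(\<lambda>e. fm ` e) ` E = (\<lambda>e. ed (c e)) ` E" using fm_edge by (intro image_cong) auto
  also have "\<dots> = ed ` F" unfolding F_def by (simp add: image_image)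
  also have "\<dots> = power_edges k F" by (simp add: power_edges_def ed_def[abs_def])
  finally show ?thesis .
qed

lemma fm_bij: "bij_betw fm V (power_vertices k W F)"
proof (rule bij_betw_imageI)
  show "inj_on fm V"
  proof (rule inj_onI)
    fix v w assume vw: "v \<in> V" "w \<in> V" "fm v = fm w"
    show "v = w"
    proof (cases "v \<in> W")
      case True
      thus ?thesis using vw by (cases "w \<in> W") (auto simp: fm_def)
    next
      case False
      hence wW: "w \<notin> W" using vw by (cases "w \<in> W") (auto simp: fm_def)
      have 1: "c (ev v) = c (ev w)" "gg (ev v) v = gg (ev w) w" using vw False wW by (auto simp: fm_def)
      have ee: "ev v = ev w" using c_inj K5[OF vw(1) False] K5[OF vw(2) wW] 1(1) by (meson inj_onD)
      have "inj_on (gg (ev v)) (ev v - c (ev v))" using bij_betw_imp_inj_on[OF gg_bij[OF K5(1)[OF vw(1) False]]] .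
      thus ?thesis using 1(2) ee K5[OF vw(1) False] K5[OF vw(2) wW] by (auto dest: inj_onD)
    qed
  qed
  show "fm ` V = power_vertices k W F"
  proof (intro set_eqI iffI)
    fix x assume "x \<in> fm ` V"
    then obtain v where v: "v \<in> V" "x = fm v" by blast
    show "x \<in> power_vertices k W F"
    proof (cases "v \<in> W")
      case True thus ?thesis using v by (simp add: fm_def power_vertices_def)
    next
      case False
      have "gg (ev v) v < k - 2" using gg_bij[OF K5(1)[OF v(1) False]] K5[OF v(1) False] by (auto simp: bij_betw_def)
      thus ?thesis using v False K5[OF v(1) False] by (auto simp: fm_def power_vertices_def F_def)
    qed
  next
    fix x assume "x \<in> power_vertices k W F"
    then consider a where "a \<in> W" "x = Inl a" | e j where "e \<in> E" "j < k - 2" "x = Inr (c e, j)"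
      unfolding power_vertices_def F_def by blast
    thus "x \<in> fm ` V"
    proof cases
      case 1 thus ?thesis using WV by (auto simp: fm_def intro!: image_eqI[of _ _ a])
    next
      case 2
      have "x \<in> ed (c e)" using 2 by (simp add: ed_def)
      hence "x \<in> fm ` e" using fm_edge[OF 2(1)] by simp
      thus ?thesis using EV[OF 2(1)] by blast
    qed
  qed
qed

lemma T_uniform: "uniform_hypergraph 2 W F"
  unfolding uniform_hypergraph_def F_def
  using finite_subset[OF WV fV] c_card W_def by auto

lemma T_acyclic: "hg_acyclic F"
  unfolding hg_acyclic_def
proof
  assume "\<exists>vs es. berge_cycle F vs es"
  then obtain vs es where bc: "berge_cycle F vs es" by blast
  define ic where "ic = inv_into E c"
  have sub: "\<And>C. C \<in> F \<Longrightarrow> ic C \<in> E \<and> C \<subseteq> ic C"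
  proof -
    fix C assume "C \<in> F"
    then obtain e where e: "e \<in> E" "C = c e" unfolding F_def by blast
    have "ic C = e" using e c_inj unfolding ic_def by (simp add: inv_into_f_f)
    thus "ic C \<in> E \<and> C \<subseteq> ic C" using e c_sub by simp
  qed
  have "berge_cycle E vs (map ic es)"
    unfolding berge_cycle_def
  proof (intro conjI allI impI)
    show "length vs = length (map ic es)" using bc by (simp add: berge_cycle_def)
    show "2 \<le> length vs" "distinct vs" using bc by (simp_all add: berge_cycle_def)
    have "inj_on ic F" unfolding ic_def F_def by (rule inj_on_inv_into) simp
    moreover have "set es \<subseteq> F" "distinct es" using bc by (simp_all add: berge_cycle_def)
    ultimately show "distinct (map ic es)" by (simp add: distinct_map inj_on_subset)
    show "set (map ic es) \<subseteq> E" using sub \<open>set es \<subseteq> F\<close> by auto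
  next
    fix i assume i: "i < length vs"
    have ei: "es ! i \<in> F" using bc i by (auto simp: berge_cycle_def)
    have "vs ! i \<in> es ! i \<and> vs ! ((i + 1) mod length vs) \<in> es ! i" using bc i unfolding berge_cycle_def by blast
    moreover have "length es = length vs" using bc by (simp add: berge_cycle_def)
    ultimately show "vs ! i \<in> map ic es ! i" "vs ! ((i + 1) mod length vs) \<in> map ic es ! i"
      using sub[OF ei] i by auto
  qed
  thus False using ac unfolding hg_acyclic_def by blast
qed

definition phi :: "'a \<Rightarrow> 'a" where "phi v = (if v \<in> W then v else (SOME a. a \<in> c (ev v)))"

lemma phi_in: assumes e: "e \<in> E" "a \<in> e" shows "phi a \<in> c e"
proof (cases "a \<in> W")
  case True thus ?thesis using K3 e by (simp add: phi_def)
next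
  case False
  have "a \<notin> c e" using False e unfolding W_def by blast
  hence "ev a = e" using ev_eq e by blast
  moreover have "c e \<noteq> {}" using c_card[OF e(1)] by auto
  ultimately show ?thesis using False by (simp add: phi_def some_in_eq)
qed

lemma T_connected: "hg_connected W F"
proof -
  let ?RH = "{(a, b). \<exists>e\<in>E. a \<in> e \<and> b \<in> e}"
  let ?RT = "{(a, b). \<exists>e\<in>F. a \<in> e \<and> b \<in> e}"
  have stepT: "(phi a, phi b) \<in> ?RT" if ab: "(a, b) \<in> ?RH" for a b
  proof -
    obtain e where "e \<in> E" "a \<in> e" "b \<in> e" using ab by blast
    thus ?thesis using phi_in unfolding F_def by blast
  qed
  have path: "(phi u, phi w) \<in> ?RT\<^sup>*" if "(u, w) \<in> ?RH\<^sup>*" for u w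
    using that
  proof (induction rule: rtrancl_induct)
    case base thus ?case by simp
  next
    case (step y z)
    thus ?case using stepT[OF step.hyps(2)]
      by (meson rtrancl.rtrancl_into_rtrancl)
  qed
  have Vne: "V \<noteq> {}" using conn by (simp add: hg_connected_def)
  then obtain v where v: "v \<in> V" by blast
  have Wne: "W \<noteq> {}"
  proof (cases "\<exists>e\<in>E. v \<in> e")
    case True
    then obtain e where "e \<in> E" by blast
    moreover have "c e \<noteq> {}" using c_card[OF \<open>e\<in>E\<close>] by auto
    ultimately show ?thesis unfolding W_def by blast
  next
    case False thus ?thesis using v unfolding W_def by blast
  qed
  show ?thesis unfolding hg_connected_def
  proof (intro conjI ballI Wne)
    fix u w assume uw: "u \<in> W" "w \<in> W"
    hence "(u, w) \<in> ?RH\<^sup>*" using conn WV unfolding hg_connected_def by blast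
    from path[OF this] show "(u, w) \<in> ?RT\<^sup>*" using uw by (simp add: phi_def)
  qed
qed

lemma is_power: "power_tree k V E"
  unfolding power_tree_def hg_isomorphic_def hypertree_def
  using T_uniform T_connected T_acyclic fm_bij edges_iso by blast

end


theorem theorem3:
  fixes V :: "'a set" and E :: "'a set set" and k :: nat
  assumes "k \<ge> 3"
    and "hypertree k V E"
  shows "(\<forall>lam\<in>hg_spectrum k V E. lam ^ k \<in> \<real>) \<longleftrightarrow> power_tree k V E"
proof
  assume allR: "\<forall>lam\<in>hg_spectrum k V E. lam ^ k \<in> \<real>"
  show "power_tree k V E"
  proof (rule ccontr)
    assume np: "\<not> power_tree k V E"
    have "\<not> (\<forall>e\<in>E. card {v\<in>e. big E v} \<le> 2)"
    proof
      assume "\<forall>e\<in>E. card {v\<in>e. big E v} \<le> 2"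
      hence "nc k V E" using assms by unfold_locales auto
      thus False using np nc.is_power by blast
    qed
    then obtain e where e: "e \<in> E" "card {v\<in>e. big E v} \<ge> 3" by auto
    obtain T where T: "T \<subseteq> {v\<in>e. big E v}" "card T = 3"
      using obtain_subset_with_card_n[OF e(2)] by blast
    then obtain v1 v2 v3 where vs: "T = {v1,v2,v3}" "v1 \<noteq> v2" "v2 \<noteq> v3" "v1 \<noteq> v3"
      using card_3_iff by metis
    have vb: "v1 \<in> e" "v2 \<in> e" "v3 \<in> e" "big E v1" "big E v2" "big E v3" using T vs by auto
    have other: "\<exists>f\<in>E. f \<noteq> e \<and> v \<in> f" if "big E v" for v
      using that unfolding big_def by metis
    obtain f1 where f1: "f1 \<in> E" "f1 \<noteq> e" "v1 \<in> f1" using other[OF vb(4)] by blast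
    obtain f2 where f2: "f2 \<in> E" "f2 \<noteq> e" "v2 \<in> f2" using other[OF vb(5)] by blast
    obtain f3 where f3: "f3 \<in> E" "f3 \<noteq> e" "v3 \<in> f3" using other[OF vb(6)] by blast
    have "cfg k V E e v1 v2 v3 f1 f2 f3"
      using assms e(1) vb vs f1 f2 f3 by unfold_locales (auto simp: hypertree_def)
    from cfg.eigen_exists[OF this] obtain lam where "is_eigenvalue k V E lam" "lam ^ k \<notin> \<real>" by blast
    thus False using allR by (auto simp: hg_spectrum_def)
  qed
next
  assume "power_tree k V E"
  then obtain W :: "'a set" and F where T: "hypertree 2 W F" and iso: "hg_isomorphic V E (power_vertices k W F) (power_edges k F)"
    unfolding power_tree_def by blast
  obtain f where f: "bij_betw f V (power_vertices k W F)" "power_edges k F = (\<lambda>e. f ` e) ` E"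
    using iso unfolding hg_isomorphic_def by blast
  have U: "uniform_hypergraph k V E" using assms by (simp add: hypertree_def)
  have k1: "1 \<le> k" using assms by simp
  have EV: "\<forall>e\<in>E. e \<subseteq> V" using U by (simp add: uniform_hypergraph_def)
  have TU: "finite W" "\<forall>e\<in>F. e \<subseteq> W \<and> card e = 2" using T by (simp_all add: hypertree_def uniform_hypergraph_def)
  show "\<forall>lam\<in>hg_spectrum k V E. lam ^ k \<in> \<real>"
  proof
    fix lam assume "lam \<in> hg_spectrum k V E"
    hence "is_eigenvalue k V E lam" by (simp add: hg_spectrum_def)
    then obtain x where x: "\<exists>v\<in>V. x v \<noteq> 0" "\<forall>j\<in>V. nbsum E x j = lam * x j ^ (k - 1)"
      using is_eigenvalue_edge[OF U k1] by blast
    obtain y where y: "\<exists>v\<in>power_vertices k W F. y v \<noteq> 0"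
       "\<forall>j\<in>power_vertices k W F. nbsum (power_edges k F) y j = lam * y j ^ (k - 1)"
      using eig_transfer[OF f(1) f(2) EV x] by blast
    show "lam ^ k \<in> \<real>" by (rule power_real[OF assms(1) TU y])
  qed
qed

end
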